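(* Let $\mathfrak h,\mathfrak n\in\mathrm{Mult}_\rho$, $\mathfrak n\ne\emptyset$, let $a$ be the smallest integer with $\mathfrak n[a]\ne\emptyset$, and suppose $\mathfrak n[a]$ is admissible to $\mathfrak h$. For an enumeration $\Delta_1,\dots,\Delta_k$ of the segments of $\mathfrak n[a]$, set $\mathfrak r_0=\mathfrak h$, $\mathfrak r_i=\mathfrak r(\{\Delta_i,\dots,\Delta_1\},\mathfrak h)$, and consider the multisegment $\{\Upsilon(\Delta_1,\mathfrak r_0),\Upsilon(\Delta_2,\mathfrak r_1),\dots,\Upsilon(\Delta_k,\mathfrak r_{k-1})\}$. This multisegment does not depend on the chosen enumeration of $\mathfrak n[a]$. (It is denoted $\mathfrak{fs}(\mathfrak n,\mathfrak h)$.)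
   Context: Segments: for integers $a\le b$, $[a,b]_\rho$ (think of the integer interval $\{a,\dots,b\}$), with $a(\Delta)=a$, $b(\Delta)=b$, and inclusion of segments as intervals. Two segments are linked if their union is a segment (an interval) and neither contains the other. A multisegment is a finite multiset of nonempty segments; $\mathrm{Mult}_\rho$ is the set of multisegments (including $\emptyset$); $+$ and $-$ denote multiset sum and difference (adding an empty segment does nothing). For $c\in\mathbb Z$, $\mathfrak m[c]$ is the submultisegment of segments $\Delta\in\mathfrak m$ with $a(\Delta)=c$. A sequence of segments $\Delta_1,\dots,\Delta_k$ is ascending if for $i<j$ either $\Delta_i,\Delta_j$ are unlinked or $a(\Delta_i)<a(\Delta_j)$. Write $[x,y]_\rho\prec^L[x',y']_\rho$ if $x<x'$, or $x=x'$ and $y<y'$. A segment $\Delta=[a,b]_\rho$ is admissible to $\mathfrak h$ if $\mathfrak h$ contains a segment $[a,c]_\rho$ with $c\ge b$. Removal process: for $\Delta=[a,b]_\rho$ admissible to $\mathfrak h$, let $\Delta_1=[a_1,b_1]_\rho$ be a shortest segment of $\mathfrak h$ with $a_1=a$ and $b_1\ge b$; recursively, let $\Delta_i=[a_i,b_i]_\rho$ be the $\prec^L$-minimal segment of $\mathfrak h$ with $a_{i-1}<a_i$ and $b\le b_i<b_{i-1}$, stopping when none exists; let $\Delta_1,\dots,\Delta_r$ be the segments obtained (the removal sequence for $(\Delta,\mathfrak h)$). Put $\Delta_i^{tr}=[a_{i+1},b_i]_\rho$ for $i<r$ and $\Delta_r^{tr}=[b+1,b_r]_\rho$ (possibly empty),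 and $\mathfrak r(\Delta,\mathfrak h)=\mathfrak h-\sum_i\Delta_i+\sum_i\Delta_i^{tr}$; also $\Upsilon(\Delta,\mathfrak h)=\Delta_1$. If $\Delta$ is not admissible to $\mathfrak h$, $\mathfrak r(\Delta,\mathfrak h)=\infty$ (a formal symbol), and $\mathfrak r(\Delta,\infty)=\infty$. For $\mathfrak m\in\mathrm{Mult}_\rho$ with segments in ascending order $\Delta_1,\dots,\Delta_k$, $\mathfrak r(\mathfrak m,\mathfrak h)=\mathfrak r(\Delta_k,\dots\mathfrak r(\Delta_1,\mathfrak h)\dots)$ (independent of the ascending order; $\mathfrak r(\emptyset,\mathfrak h)=\mathfrak h$), and $\mathfrak m$ is admissible to $\mathfrak h$ if $\mathfrak r(\mathfrak m,\mathfrak h)\ne\infty$. *)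

theory Defs
  imports Main "HOL-Library.Multiset" "HOL-Library.Product_Lexorder"
begin

text \<open>A segment [a,b]_rho is represented by the pair (a,b) :: int * int (nonempty iff a <= b). The cuspidal rho is fixed and
  plays no role. The product lexicographic order on int * int is exactly the order prec^L.\<close>

type_synonym seg = "int \<times> int"

definition is_mult :: "seg multiset \<Rightarrow> bool" where
  "is_mult m \<longleftrightarrow> (\<forall>s\<in>#m. fst s \<le> snd s)"

definition mpart :: "seg multiset \<Rightarrow> int \<Rightarrow> seg multiset" where
  "mpart m c = filter_mset (\<lambda>s. fst s = c) m"

definition seg_admissible :: "seg \<Rightarrow> seg multiset \<Rightarrow> bool" where
  "seg_admissible d h \<longleftrightarrow> (\<exists>c. (fst d, c) \<in># h \<and> snd d \<le> c)"

definition upsilon :: "seg \<Rightarrow> seg multiset \<Rightarrow> seg" where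
  "upsilon d h = (fst d, Min {c. (fst d, c) \<in># h \<and> snd d \<le> c})"

definition lmin :: "seg set \<Rightarrow> seg" where
  "lmin S = (let x = Min (fst ` S) in (x, Min (snd ` {s\<in>S. fst s = x})))"

definition cands :: "seg multiset \<Rightarrow> int \<Rightarrow> seg \<Rightarrow> seg set" where
  "cands h b s = {t\<in>set_mset h. fst s < fst t \<and> b \<le> snd t \<and> snd t < snd s}"

definition next_seg :: "seg multiset \<Rightarrow> int \<Rightarrow> seg \<Rightarrow> seg option" where
  "next_seg h b s = (if cands h b s = {} then None else Some (lmin (cands h b s)))"

lemma lmin_in: "finite S \<Longrightarrow> S \<noteq> {} \<Longrightarrow> lmin S \<in> S"
proof -
  assume f: "finite S" and ne: "S \<noteq> {}"
  define x where "x = Min (fst ` S)"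
  have "x \<in> fst ` S" using f ne by (simp add: x_def)
  then have ne2: "{s\<in>S. fst s = x} \<noteq> {}" by auto
  have "Min (snd ` {s\<in>S. fst s = x}) \<in> snd ` {s\<in>S. fst s = x}"
    using f ne2 by (intro Min_in) auto
  then show ?thesis unfolding lmin_def Let_def x_def[symmetric] by auto
qed

lemma next_seg_dec:
  assumes "next_seg h b s = Some t" shows "b \<le> snd t \<and> snd t < snd s"
proof -
  have ne: "cands h b s \<noteq> {}" and t: "t = lmin (cands h b s)"
    using assms by (auto simp: next_seg_def split: if_splits)
  have "finite (cands h b s)" unfolding cands_def by auto
  then have "t \<in> cands h b s" using lmin_in ne t by auto
  then show ?thesis unfolding cands_def by auto
qed

function rem_seq :: "seg multiset \<Rightarrow> int \<Rightarrow> seg \<Rightarrow> seg list" where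
  "rem_seq h b s = s # (case next_seg h b s of None \<Rightarrow> [] | Some t \<Rightarrow> rem_seq h b t)"
  by auto
termination
  by (relation "measure (\<lambda>(h, b, s). nat (snd s - b))")
     (auto dest!: next_seg_dec)

fun truncs :: "int \<Rightarrow> seg list \<Rightarrow> seg multiset" where
  "truncs b [] = {#}"
| "truncs b [s] = (if b + 1 \<le> snd s then {#(b + 1, snd s)#} else {#})"
| "truncs b (s # t # rest) = add_mset (fst t, snd s) (truncs b (t # rest))"

text \<open>r(Delta,h); None plays the role of the formal symbol infinity.\<close>
definition rmv :: "seg \<Rightarrow> seg multiset option \<Rightarrow> seg multiset option" where
  "rmv d oh = (case oh of None \<Rightarrow> None | Some h \<Rightarrow>
     (if seg_admissible d h then
        (let sq = rem_seq h (snd d) (upsilon d h) in Some (h - mset sq + truncs (snd d) sq))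
      else None))"

text \<open>r(m,h): apply the segments of m in an ascending order; sorting by prec^L
  (i.e. by start, then end) gives an ascending order.\<close>
definition rmult :: "seg multiset \<Rightarrow> seg multiset \<Rightarrow> seg multiset option" where
  "rmult m h = fold rmv (sorted_list_of_multiset m) (Some h)"

definition admissible :: "seg multiset \<Rightarrow> seg multiset \<Rightarrow> bool" where
  "admissible m h \<longleftrightarrow> rmult m h \<noteq> None"

definition fs_list :: "seg list \<Rightarrow> seg multiset \<Rightarrow> seg multiset" where
  "fs_list xs h = mset (map (\<lambda>i. upsilon (xs ! i) (the (rmult (mset (take i xs)) h)))
                         [0..<length xs])"

end

theory Submission
  imports Defs
begin

declare rem_seq.simps[simp del]

definition Sset :: "seg \<Rightarrow> seg multiset \<Rightarrow> int set" where
  "Sset d C = {c. (fst d, c) \<in># C \<and> snd d \<le> c}"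

lemma in_remove1_mset_neq: "x \<noteq> y \<Longrightarrow> x \<in># M - {#y#} \<longleftrightarrow> x \<in># M"
  by (auto simp: in_diff_count)

lemma Sset_fin: "finite (Sset d C)"
  by (rule finite_subset[of _ "snd ` set_mset C"]) (force simp: Sset_def)+

lemma ups_def2: "upsilon d C = (fst d, Min (Sset d C))"
  by (simp add: upsilon_def Sset_def)

lemma adm_def2: "seg_admissible d C \<longleftrightarrow> Sset d C \<noteq> {}"
  by (auto simp: seg_admissible_def Sset_def)

lemma ups_props:
  assumes "Sset d C \<noteq> {}"
  shows "upsilon d C \<in># C" "snd d \<le> snd (upsilon d C)" "fst (upsilon d C) = fst d"
    "\<And>c. c \<in> Sset d C \<Longrightarrow> snd (upsilon d C) \<le> c"
proof -
  have "Min (Sset d C) \<in> Sset d C" using Min_in[OF Sset_fin assms] .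
  then show "upsilon d C \<in># C" "snd d \<le> snd (upsilon d C)" "fst (upsilon d C) = fst d"
    by (auto simp: ups_def2 Sset_def)
  show "\<And>c. c \<in> Sset d C \<Longrightarrow> snd (upsilon d C) \<le> c"
    using Sset_fin by (auto simp: ups_def2)
qed

lemma ups_eq:
  assumes "x \<in> Sset d C" "\<And>c. c \<in> Sset d C \<Longrightarrow> x \<le> c"
  shows "upsilon d C = (fst d, x)"
  unfolding ups_def2 using Min_eqI[OF Sset_fin assms(2) assms(1)] by simp

definition stepo :: "seg \<Rightarrow> seg multiset option \<Rightarrow> seg multiset option" where
  "stepo d X = (case X of None \<Rightarrow> None | Some C \<Rightarrow>
     (if seg_admissible d C then Some (C - {#upsilon d C#}) else None))"

lemma stepo_None[simp]: "stepo d None = None"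
  by (simp add: stepo_def)

lemma stepo_Some: "stepo d (Some C) = (if Sset d C \<noteq> {} then Some (C - {#upsilon d C#}) else None)"
  by (simp add: stepo_def adm_def2)

lemma stepo_comm_le:
  assumes "fst d1 = fst d2" "snd d1 \<le> snd d2"
  shows "stepo d1 (stepo d2 (Some C)) = stepo d2 (stepo d1 (Some C))"
proof (cases "Sset d1 C = {}")
  case True
  then have "Sset d2 C = {}" using assms by (auto simp: Sset_def)
  then show ?thesis using True by (simp add: stepo_Some)
next
  case False
  define c1 where "c1 = snd (upsilon d1 C)"
  have u1: "upsilon d1 C = (fst d1, c1)" using ups_props(3)[OF False] by (simp add: c1_def prod_eq_iff)
  have c1in: "c1 \<in> Sset d1 C" using ups_props[OF False] u1 by (auto simp: Sset_def)
  have c1min: "\<And>c. c \<in> Sset d1 C \<Longrightarrow> c1 \<le> c" using ups_props(4)[OF False] c1_def by auto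
  show ?thesis
  proof (cases "snd d2 \<le> c1")
    case True
    have in2: "c1 \<in> Sset d2 C" using c1in True assms by (auto simp: Sset_def)
    have "\<And>c. c \<in> Sset d2 C \<Longrightarrow> c1 \<le> c" using c1min assms by (auto simp: Sset_def)
    then have u2: "upsilon d2 C = (fst d1, c1)" using ups_eq[OF in2] assms by simp
    define C' where "C' = C - {#(fst d1, c1)#}"
    have SS: "Sset d1 C' = Sset d2 C'"
    proof -
      have "\<And>c. (fst d1, c) \<in># C' \<Longrightarrow> snd d1 \<le> c \<Longrightarrow> snd d2 \<le> c"
      proof -
        fix c assume "(fst d1, c) \<in># C'" "snd d1 \<le> c"
        then have "c \<in> Sset d1 C" unfolding C'_def Sset_def by (auto dest: in_diffD)
        then show "snd d2 \<le> c" using c1min True by force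
      qed
      then show ?thesis using assms by (auto simp: Sset_def)
    qed
    have "stepo d1 (Some C') = stepo d2 (Some C')"
      using SS assms by (simp add: stepo_Some ups_def2)
    moreover have "Sset d2 C \<noteq> {}" using in2 by auto
    ultimately show ?thesis using False u1 u2 by (simp add: stepo_Some C'_def)
  next
    case False2: False
    define C1 where "C1 = C - {#(fst d1, c1)#}"
    have S2eq: "Sset d2 C1 = Sset d2 C"
      using False2 assms by (auto simp: Sset_def C1_def in_remove1_mset_neq dest: in_diffD)
    show ?thesis
    proof (cases "Sset d2 C = {}")
      case True
      then show ?thesis using S2eq False u1 by (simp add: stepo_Some C1_def)
    next
      case F3: False
      define c2 where "c2 = snd (upsilon d2 C)"
      have u2: "upsilon d2 C = (fst d1, c2)" using ups_props(3)[OF F3] assms by (simp add: c2_def prod_eq_iff)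
      have c2in: "c2 \<in> Sset d2 C" using ups_props[OF F3] u2 assms by (auto simp: Sset_def)
      have u2': "upsilon d2 C1 = (fst d1, c2)" using u2 S2eq assms by (simp add: ups_def2)
      have neq: "c1 \<noteq> c2" using c2in False2 by (auto simp: Sset_def)
      define C2 where "C2 = C - {#(fst d1, c2)#}"
      have c1in2: "c1 \<in> Sset d1 C2" using c1in neq by (auto simp: Sset_def C2_def in_remove1_mset_neq)
      have "\<And>c. c \<in> Sset d1 C2 \<Longrightarrow> c1 \<le> c"
        using c1min by (auto simp: Sset_def C2_def dest: in_diffD)
      then have u1': "upsilon d1 C2 = (fst d1, c1)" using ups_eq[OF c1in2] by simp
      have "Sset d1 C2 \<noteq> {}" using c1in2 by auto
      then show ?thesis using False F3 u1 u2 u1' u2' S2eq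
        by (simp add: stepo_Some C1_def C2_def diff_right_commute add_mset_commute)
    qed
  qed
qed

lemma stepo_comm:
  assumes "fst d1 = fst d2"
  shows "stepo d1 (stepo d2 X) = stepo d2 (stepo d1 X)"
proof (cases X)
  case None then show ?thesis by simp
next
  case (Some C)
  show ?thesis
  proof (cases "snd d1 \<le> snd d2")
    case True then show ?thesis using stepo_comm_le[of d1 d2 C] assms Some by auto
  next
    case False then show ?thesis using stepo_comm_le[of d2 d1 C] assms Some by auto
  qed
qed

lemma fold_stepo_perm:
  assumes "\<forall>x\<in>set xs. fst x = a" "mset xs = mset ys"
  shows "fold stepo xs X = fold stepo ys X"
proof -
  have "fold stepo xs = fold stepo ys"
  proof (rule fold_multiset_equiv)
    fix x y assume "x \<in> set xs" "y \<in> set xs"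
    then have "fst x = fst y" using assms by auto
    then show "stepo x \<circ> stepo y = stepo y \<circ> stepo x" using stepo_comm by (auto simp: fun_eq_iff)
  qed (use assms in auto)
  then show ?thesis by simp
qed

lemma next_seg_fst:
  assumes "next_seg h b s = Some t" shows "fst s < fst t"
proof -
  have ne: "cands h b s \<noteq> {}" and t: "t = lmin (cands h b s)"
    using assms by (auto simp: next_seg_def split: if_splits)
  have "finite (cands h b s)" unfolding cands_def by auto
  then have "t \<in> cands h b s" using lmin_in ne t by auto
  then show ?thesis unfolding cands_def by auto
qed

lemma rem_seq_unf: "rem_seq h b s = s # (case next_seg h b s of None \<Rightarrow> [] | Some t \<Rightarrow> rem_seq h b t)"
  by (rule rem_seq.simps)

lemma rem_seq_fst: "t \<in> set (rem_seq h b s) \<Longrightarrow> fst s \<le> fst t"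
proof (induction h b s rule: rem_seq.induct)
  case (1 h b s)
  show ?case
  proof (cases "next_seg h b s")
    case None then show ?thesis using "1.prems" rem_seq_unf[of h b s] by simp
  next
    case (Some t')
    have "fst s < fst t'" using next_seg_fst[OF Some] .
    then show ?thesis using "1.prems" "1.IH"[OF Some] Some rem_seq_unf[of h b s] by fastforce
  qed
qed

lemma rem_seq_cons: "\<exists>rest. rem_seq h b s = s # rest \<and> (\<forall>t\<in>set rest. fst s < fst t)"
proof (cases "next_seg h b s")
  case None then show ?thesis using rem_seq_unf[of h b s] by simp
next
  case (Some t')
  have "fst s < fst t'" using next_seg_fst[OF Some] .
  then have "\<forall>t\<in>set (rem_seq h b t'). fst s < fst t" using rem_seq_fst[of _ h b t'] by fastforce
  then show ?thesis using rem_seq_unf[of h b s] Some by simp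
qed

lemma truncs_fst: "x \<in># truncs b L \<Longrightarrow> fst x = b + 1 \<or> fst x \<in> fst ` set (tl L)"
  by (induction b L rule: truncs.induct) (auto split: if_splits)

lemma rmv_proj:
  assumes "fst d = a" "a \<le> snd d"
  shows "map_option (\<lambda>h. mpart h a) (rmv d oh) = stepo d (map_option (\<lambda>h. mpart h a) oh)"
proof (cases oh)
  case None then show ?thesis by (simp add: rmv_def)
next
  case (Some h)
  have SS: "Sset d (mpart h a) = Sset d h" using assms by (auto simp: Sset_def mpart_def)
  have UU: "upsilon d (mpart h a) = upsilon d h" using SS by (simp add: ups_def2)
  show ?thesis
  proof (cases "Sset d h = {}")
    case True then show ?thesis using Some SS by (simp add: rmv_def stepo_Some adm_def2)
  next
    case False
    define u where "u = upsilon d h"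
    have fu: "fst u = a" using ups_props(3)[OF False] assms u_def by simp
    obtain rest where r: "rem_seq h (snd d) u = u # rest" and rf: "\<forall>t\<in>set rest. fst u < fst t"
      using rem_seq_cons by blast
    have m1: "mpart (mset (u # rest)) a = {#u#}"
    proof -
      have "filter_mset (\<lambda>s. fst s = a) (mset rest) = {#}"
        using rf fu by (auto simp: filter_mset_eq_conv)
      then show ?thesis using fu by (simp add: mpart_def)
    qed
    have m2: "mpart (truncs (snd d) (u # rest)) a = {#}"
    proof -
      have "\<forall>x\<in>#truncs (snd d) (u # rest). fst x \<noteq> a"
        using truncs_fst[of _ "snd d" "u # rest"] rf fu assms by fastforce
      then show ?thesis by (auto simp: mpart_def filter_mset_eq_conv)
    qed
    have "mpart (h - mset (u # rest) + truncs (snd d) (u # rest)) a = mpart h a - {#u#}"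
      using m1 m2 unfolding mpart_def by simp
    then show ?thesis using Some False SS UU r
      by (simp add: rmv_def stepo_Some adm_def2 u_def Let_def)
  qed
qed

lemma ups_mpart: "fst d = a \<Longrightarrow> upsilon d (mpart h a) = upsilon d h"
  by (auto simp: ups_def2 Sset_def mpart_def)

lemma fold_rmv_proj:
  assumes "\<forall>x\<in>set L. fst x = a \<and> a \<le> snd x"
  shows "map_option (\<lambda>h. mpart h a) (fold rmv L oh) = fold stepo L (map_option (\<lambda>h. mpart h a) oh)"
  using assms
proof (induction L arbitrary: oh)
  case Nil then show ?case by simp
next
  case (Cons x L)
  then show ?case using rmv_proj[of x a oh] by simp
qed

lemma rmult_proj:
  assumes "\<forall>x\<in>set L. fst x = a \<and> a \<le> snd x"
  shows "map_option (\<lambda>h. mpart h a) (rmult (mset L) h) = fold stepo L (Some (mpart h a))"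
proof -
  define S where "S = sorted_list_of_multiset (mset L)"
  have mS: "mset S = mset L" by (simp add: S_def)
  then have sS: "set S = set L" by (metis set_mset_mset)
  have "map_option (\<lambda>h. mpart h a) (rmult (mset L) h) = fold stepo S (Some (mpart h a))"
    unfolding rmult_def S_def[symmetric] using fold_rmv_proj[of S a "Some h"] assms sS by simp
  also have "\<dots> = fold stepo L (Some (mpart h a))"
    by (rule fold_stepo_perm[of _ a]) (use assms sS mS in auto)
  finally show ?thesis .
qed

lemma fs_list_snoc: "fs_list (xs @ [x]) h = fs_list xs h + {#upsilon x (the (rmult (mset xs) h))#}"
proof -
  define f where "f = (\<lambda>i. upsilon ((xs @ [x]) ! i) (the (rmult (mset (take i (xs @ [x]))) h)))"
  define g where "g = (\<lambda>i. upsilon (xs ! i) (the (rmult (mset (take i xs)) h)))"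
  have e: "map f [0..<length xs] = map g [0..<length xs]"
    by (rule map_cong) (auto simp: nth_append f_def g_def)
  have "fs_list (xs @ [x]) h = mset (map f [0..<Suc (length xs)])"
    unfolding fs_list_def f_def by simp
  also have "\<dots> = mset (map f [0..<length xs]) + {#f (length xs)#}" by simp
  also have "\<dots> = mset (map g [0..<length xs]) + {#f (length xs)#}" by (simp only: e)
  also have "f (length xs) = upsilon x (the (rmult (mset xs) h))" by (simp add: f_def)
  finally show ?thesis unfolding fs_list_def g_def by simp
qed

lemma fs_main:
  assumes "\<forall>x\<in>set xs. fst x = a \<and> a \<le> snd x"
    and "fold stepo xs (Some (mpart h a)) = Some C"
  shows "fs_list xs h = mpart h a - C \<and> C \<subseteq># mpart h a"
  using assms
proof (induction xs arbitrary: C rule: rev_induct)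
  case Nil then show ?case by (simp add: fs_list_def)
next
  case (snoc x xs)
  define H where "H = mpart h a"
  have Px: "fst x = a" "a \<le> snd x" and Pxs: "\<forall>x\<in>set xs. fst x = a \<and> a \<le> snd x"
    using snoc.prems by auto
  have st: "stepo x (fold stepo xs (Some H)) = Some C" using snoc.prems by (simp add: H_def)
  then obtain C0 where F0: "fold stepo xs (Some H) = Some C0"
    by (cases "fold stepo xs (Some H)") auto
  have ne: "Sset x C0 \<noteq> {}" and CC: "C = C0 - {#upsilon x C0#}"
    using st F0 by (auto simp: stepo_Some split: if_splits)
  have IH: "fs_list xs h = H - C0" "C0 \<subseteq># H" using snoc.IH[OF Pxs] F0 H_def by auto
  have "map_option (\<lambda>h. mpart h a) (rmult (mset xs) h) = Some C0"
    using rmult_proj[OF Pxs, of h] F0 H_def by simp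
  then obtain r where r: "rmult (mset xs) h = Some r" "mpart r a = C0" by auto
  define u where "u = upsilon x C0"
  have uu: "upsilon x (the (rmult (mset xs) h)) = u"
    using r ups_mpart[OF Px(1), of r] u_def by simp
  have uin: "u \<in># C0" using ups_props(1)[OF ne] u_def by simp
  have fs: "fs_list (xs @ [x]) h = (H - C0) + {#u#}" using fs_list_snoc IH uu by simp
  have "(H - C0) + {#u#} = H - (C0 - {#u#})"
  proof (rule multiset_eqI)
    fix y
    have "count C0 y \<le> count H y" using IH(2) by (metis subseteq_mset_def)
    moreover have "count {#u#} y \<le> count C0 y" using uin by (metis single_subset_iff subseteq_mset_def)
    ultimately show "count (H - C0 + {#u#}) y = count (H - (C0 - {#u#})) y"
      by (cases "u = y") (auto simp: Suc_diff_le)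
  qed
  moreover have "C0 - {#u#} \<subseteq># H" using IH(2) by (meson diff_subset_eq_self subset_mset.order_trans)
  ultimately show ?case using fs CC u_def H_def by simp
qed

theorem mainTheorem3:
  fixes h n :: "seg multiset" and xs ys :: "seg list"
  assumes "is_mult h" and "is_mult n" and "n \<noteq> {#}"
    and "admissible (mpart n (Min (fst ` set_mset n))) h"
    and "mset xs = mpart n (Min (fst ` set_mset n))"
    and "mset ys = mpart n (Min (fst ` set_mset n))"
  shows "fs_list xs h = fs_list ys h"
proof -
  define a where "a = Min (fst ` set_mset n)"
  have P: "\<forall>x\<in>set L. fst x = a \<and> a \<le> snd x" if "mset L = mpart n a" for L
  proof
    fix x assume "x \<in> set L"
    then have "x \<in># mpart n a" using that by (metis set_mset_mset)
    then have "x \<in># n" "fst x = a" by (auto simp: mpart_def)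
    then show "fst x = a \<and> a \<le> snd x" using assms(2) by (auto simp: is_mult_def)
  qed
  have Px: "\<forall>x\<in>set xs. fst x = a \<and> a \<le> snd x" using P assms(5) a_def by simp
  have Py: "\<forall>x\<in>set ys. fst x = a \<and> a \<le> snd x" using P assms(6) a_def by simp
  have "rmult (mset xs) h \<noteq> None" using assms(4,5) a_def by (simp add: admissible_def)
  then have "fold stepo xs (Some (mpart h a)) \<noteq> None" using rmult_proj[OF Px, of h]
    by (cases "rmult (mset xs) h") (auto dest: sym)
  then obtain C where C: "fold stepo xs (Some (mpart h a)) = Some C" by auto
  have "fold stepo ys (Some (mpart h a)) = fold stepo xs (Some (mpart h a))"
    by (rule fold_stepo_perm[of _ a]) (use Py assms(5,6) in auto)
  then have Cy: "fold stepo ys (Some (mpart h a)) = Some C" using C by simp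
  show ?thesis using fs_main[OF Px C] fs_main[OF Py Cy] by simp
qed

end
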